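(* Let $p\geq3$ be a prime and let $1\leq r_1\leq\cdots\leq r_\beta\leq p-1$ be integers with $p\mid\sum_{j=1}^\beta r_j$. Put $H(k)=\sum_{j=1}^{\beta}\left\{\frac{kr_j}{p}\right\}$, where $\{x\}=x-[x]$ denotes the fractional part. Let $1\leq\theta\leq p-1$ be an integer such that $H(k)=1$ for all $1\leq k\leq\theta$. Then $\beta\leq p$ and $\theta\leq\left[\frac{p}{\beta-1}\right]$.
   Context: $[x]$ denotes the integral part of a rational number $x$. *)

theory Defs
  imports Complex_Main "HOL-Computational_Algebra.Primes"
begin

definition Hsum :: "nat \<Rightarrow> nat \<Rightarrow> (nat \<Rightarrow> nat) \<Rightarrow> nat \<Rightarrow> real" where
  "Hsum p \<beta> r k = (\<Sum>j=1..\<beta>. frac (real k * real (r j) / real p))"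

end

theory Submission
  imports Defs
begin

lemma ind_card: "finite A \<Longrightarrow> (\<Sum>x\<in>A. if P x then 1 else (0::nat)) = card {x\<in>A. P x}"
  by (simp add: sum.If_cases Int_def)

lemma frac_nat: "0 < p \<Longrightarrow> frac (real n / real p) = real (n mod p) / real p"
proof -
  assume p: "0 < p"
  have "real n = real p * real (n div p) + real (n mod p)"
    by (metis of_nat_add of_nat_mult div_mult_mod_eq mult.commute)
  then have "real n / real p = real (n div p) + real (n mod p) / real p"
    using p by (simp add: field_simps)
  moreover have "\<lfloor>real n / real p\<rfloor> = int (n div p)"
    using floor_divide_of_nat_eq[of n p] by simp
  ultimately show ?thesis unfolding frac_def by simp
qed

lemma Hsum_eq: "0 < p \<Longrightarrow> Hsum p \<beta> r k = real (\<Sum>j=1..\<beta>. (k * r j) mod p) / real p"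
  unfolding Hsum_def of_nat_sum sum_divide_distrib
  by (rule sum.cong) (use frac_nat[of p] in \<open>auto simp flip: of_nat_mult\<close>)

theorem lemma3p13:
  fixes p \<beta> \<theta> :: nat and r :: "nat \<Rightarrow> nat"
  assumes "prime p" and "p \<ge> 3"
    and "\<And>j. j \<in> {1..\<beta>} \<Longrightarrow> 1 \<le> r j \<and> r j \<le> p - 1"
    and "\<And>i j. i \<in> {1..\<beta>} \<Longrightarrow> j \<in> {1..\<beta>} \<Longrightarrow> i \<le> j \<Longrightarrow> r i \<le> r j"
    and "p dvd (\<Sum>j=1..\<beta>. r j)"
    and "1 \<le> \<theta>" and "\<theta> \<le> p - 1"
    and "\<And>k. 1 \<le> k \<Longrightarrow> k \<le> \<theta> \<Longrightarrow> Hsum p \<beta> r k = 1"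
  shows "\<beta> \<le> p \<and> int \<theta> \<le> \<lfloor>real p / (real \<beta> - 1)\<rfloor>"
proof -
  note pr = assms(1) and rb = assms(3) and H = assms(8)
  have p0: "0 < p" using assms(2) by simp
  define C where "C = {1..\<beta>}"
  define a where "a = (\<lambda>c l. (l * r c) mod p)"
  have S: "(\<Sum>c\<in>C. a c k) = p" if "1 \<le> k" "k \<le> \<theta>" for k
  proof -
    have "real (\<Sum>c\<in>C. a c k) / real p = 1"
      using H[OF that] Hsum_eq[OF p0, of \<beta> r k] by (simp add: C_def a_def)
    then have "real (\<Sum>c\<in>C. a c k) = real p" using p0 by (simp add: field_simps)
    then show ?thesis by linarith
  qed
  have altp: "a c l < p" for c l using p0 by (simp add: a_def)
  have nz: "a c l \<noteq> 0" if "c \<in> C" "1 \<le> l" "l < p" for c l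
  proof
    assume "a c l = 0"
    then have "p dvd l * r c" by (simp add: a_def mod_eq_0_iff_dvd)
    then have "p dvd l \<or> p dvd r c" using pr by (simp add: prime_dvd_mult_iff)
    moreover have "1 \<le> r c" "r c < p" using rb[of c] that p0 by (auto simp: C_def)
    ultimately show False using that by (auto dest: dvd_imp_le)
  qed
  have inj: "a c l1 \<noteq> a c l2" if "c \<in> C" "1 \<le> l1" "l1 < l2" "l2 < p" for c l1 l2
  proof
    assume "a c l1 = a c l2"
    then have "p dvd l2 * r c - l1 * r c"
      using mod_eq_dvd_iff_nat[of "l1 * r c" "l2 * r c" p] that by (simp add: a_def)
    then have "p dvd (l2 - l1) * r c" by (simp add: diff_mult_distrib)
    then have "p dvd (l2 - l1) \<or> p dvd r c" using pr by (simp add: prime_dvd_mult_iff)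
    moreover have "1 \<le> r c" "r c < p" using rb[of c] that p0 by (auto simp: C_def)
    ultimately show False using that by (auto dest: dvd_imp_le)
  qed
  have carry: "(\<Sum>c\<in>C. if a c (l+m) < a c l then 1 else (0::nat)) = 1"
    if "1 \<le> l" "1 \<le> m" "l + m \<le> \<theta>" for l m
  proof -
    have each: "a c l + a c m = a c (l+m) + p * (if a c (l+m) < a c l then 1 else 0)"
      if "c \<in> C" for c
    proof -
      have z: "a c (l+m) = (a c l + a c m) mod p"
        by (simp add: a_def add_mult_distrib mod_add_eq)
      have ym: "1 \<le> a c m" proof -
        have "m < p" using \<open>1 \<le> l\<close> \<open>l + m \<le> \<theta>\<close> assms(7) p0 by linarith
        then show ?thesis using nz[OF that, of m] \<open>1 \<le> m\<close> by linarith
      qed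
      have xl: "a c l < p" "a c m < p" using altp by auto
      show ?thesis
      proof (cases "a c l + a c m < p")
        case True
        then show ?thesis using z ym by simp
      next
        case False
        then have "a c (l+m) = a c l + a c m - p" using z xl
          by (simp add: le_mod_geq)
        then show ?thesis using False xl by auto
      qed
    qed
    have "(\<Sum>c\<in>C. a c l + a c m) = 2 * p"
      using S[of l] S[of m] that by (simp add: sum.distrib)
    moreover have "(\<Sum>c\<in>C. a c l + a c m) =
        (\<Sum>c\<in>C. a c (l+m)) + p * (\<Sum>c\<in>C. if a c (l+m) < a c l then 1 else 0)"
      using each by (simp add: sum.distrib sum_distrib_left)
    ultimately show ?thesis using S[of "l+m"] that p0 by simp
  qed
  have lower: "(\<Sum>l\<in>{1..<k}. if a c k < a c l then 1 else (0::nat)) + a c k \<ge> k"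
    if "c \<in> C" "1 \<le> k" "k \<le> \<theta>" for c k
  proof -
    define L where "L = {1..<k}"
    define Ls where "Ls = {l\<in>L. \<not> a c k < a c l}"
    have "(\<Sum>l\<in>L. if a c k < a c l then 1 else (0::nat)) = card {l\<in>L. a c k < a c l}"
      by (simp add: ind_card L_def)
    moreover have "card L = card {l\<in>L. a c k < a c l} + card Ls"
    proof -
      have eq: "{l\<in>L. a c k < a c l} \<union> Ls = L" by (auto simp: Ls_def)
      have "card ({l\<in>L. a c k < a c l} \<union> Ls) = card {l\<in>L. a c k < a c l} + card Ls"
        by (rule card_Un_disjoint) (auto simp: L_def Ls_def)
      then show ?thesis unfolding eq .
    qed
    moreover have "card Ls \<le> a c k - 1"
    proof -
      have io: "inj_on (a c) Ls"
      proof (rule inj_onI)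
        fix x y assume "x \<in> Ls" "y \<in> Ls" "a c x = a c y"
        then have xy: "1 \<le> x" "x < p" "1 \<le> y" "y < p" "a c x = a c y"
          using that assms(7) p0 unfolding Ls_def L_def by auto
        show "x = y"
        proof (rule ccontr)
          assume "x \<noteq> y"
          then have "x < y \<or> y < x" by arith
          then show False using inj[OF \<open>c \<in> C\<close>, of x y] inj[OF \<open>c \<in> C\<close>, of y x] xy by auto
        qed
      qed
      have "a c ` Ls \<subseteq> {1..<a c k}"
      proof
        fix v assume "v \<in> a c ` Ls"
        then obtain l where l: "l \<in> Ls" "v = a c l" by auto
        have "1 \<le> l" "l < k" using l by (auto simp: Ls_def L_def)
        then have "a c l \<noteq> 0" "a c l \<noteq> a c k"
          using nz[OF \<open>c \<in> C\<close>, of l] inj[OF \<open>c \<in> C\<close>, of l k] that assms(7) by auto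
        then show "v \<in> {1..<a c k}" using l by (auto simp: Ls_def)
      qed
      then have "card (a c ` Ls) \<le> card {1..<a c k}" by (intro card_mono) auto
      then show ?thesis using card_image[OF io] by simp
    qed
    moreover have "card L = k - 1" by (simp add: L_def)
    moreover have "a c k \<ge> 1"
    proof -
      have "k < p" using that assms(7) p0 by linarith
      then show ?thesis using nz[OF \<open>c \<in> C\<close>, of k] that by linarith
    qed
    ultimately show ?thesis unfolding L_def by linarith
  qed
  have r1: "a c 1 = r c" if "c \<in> C" for c
    using rb[of c] that p0 by (auto simp: a_def C_def)
  have sr: "(\<Sum>c\<in>C. r c) = p" using S[of 1] assms(6) r1 by simp
  have bp: "\<beta> \<le> p"
  proof -
    have "(\<Sum>c\<in>C. (1::nat)) \<le> (\<Sum>c\<in>C. r c)"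
      by (intro sum_mono) (use rb in \<open>auto simp: C_def\<close>)
    then show ?thesis using sr by (simp add: C_def)
  qed
  have b2: "\<beta> \<ge> 2"
  proof (rule ccontr)
    assume "\<not> 2 \<le> \<beta>"
    then have "\<beta> = 0 \<or> \<beta> = 1" by auto
    then show False
    proof
      assume "\<beta> = 0" then show False using sr p0 by (simp add: C_def)
    next
      assume "\<beta> = 1" then show False using sr rb[of 1] p0 by (simp add: C_def)
    qed
  qed
  have key: "\<beta> * \<theta> \<le> \<theta> - 1 + p"
  proof -
    have "(\<Sum>c\<in>C. \<theta>) \<le> (\<Sum>c\<in>C. (\<Sum>l\<in>{1..<\<theta>}. if a c \<theta> < a c l then 1 else (0::nat)) + a c \<theta>)"
      by (intro sum_mono lower) (use assms(6) in auto)
    also have "\<dots> = (\<Sum>l\<in>{1..<\<theta>}. \<Sum>c\<in>C. if a c \<theta> < a c l then 1 else (0::nat)) + p"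
    proof -
      have sw: "(\<Sum>c\<in>C. \<Sum>l\<in>{1..<\<theta>}. if a c \<theta> < a c l then 1 else (0::nat))
          = (\<Sum>l\<in>{1..<\<theta>}. \<Sum>c\<in>C. if a c \<theta> < a c l then 1 else (0::nat))"
        by (rule sum.swap)
      show ?thesis using S[of \<theta>] assms(6) sw by (simp only: sum.distrib)
    qed
    also have "(\<Sum>l\<in>{1..<\<theta>}. \<Sum>c\<in>C. if a c \<theta> < a c l then 1 else (0::nat)) = (\<Sum>l\<in>{1..<\<theta>}. 1)"
    proof (rule sum.cong)
      fix l assume "l \<in> {1..<\<theta>}"
      then show "(\<Sum>c\<in>C. if a c \<theta> < a c l then 1 else (0::nat)) = 1"
        using carry[of l "\<theta> - l"] by auto
    qed simp
    finally show ?thesis by (simp add: C_def)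
  qed
  have "real \<theta> \<le> real p / (real \<beta> - 1)"
  proof -
    have "real \<beta> * real \<theta> \<le> real \<theta> - 1 + real p"
      using key assms(6) by (metis of_nat_le_iff of_nat_mult of_nat_add of_nat_diff of_nat_1) 
    then have "real \<theta> * (real \<beta> - 1) \<le> real p" by (simp add: algebra_simps)
    moreover have "real \<beta> - 1 > 0" using b2 by simp
    ultimately show ?thesis by (simp add: field_simps)
  qed
  then have "int \<theta> \<le> \<lfloor>real p / (real \<beta> - 1)\<rfloor>"
    by (simp add: le_floor_iff)
  then show ?thesis using bp by simp
qed

end
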